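(* Every statistically convergent sequence in an $S$-metric space $(X,S)$ has a convergent subsequence.
   Context: An $S$-metric on a nonempty set $X$ is a function $S:X^3\to[0,\infty)$ such that for all $x,y,z,a\in X$: $S(x,y,z)=0$ if and only if $x=y=z$, and $S(x,y,z)\le S(x,x,a)+S(y,y,a)+S(z,z,a)$. A sequence $\{y_n\}$ converges to $y$ if for every $\varepsilon>0$ there is $k$ with $S(y_n,y_n,y)<\varepsilon$ for all $n\ge k$. For $B\subset\mathbb N$ the natural density is $\delta(B)=\lim_{n\to\infty}\frac{|\{k\in B:k\le n\}|}{n}$ when the limit exists. A sequence $\{x_n\}$ is statistically convergent to $x\in X$ if for every $\varepsilon>0$, $\delta(\{n\in\mathbb N: S(x_n,x_n,x)\ge\varepsilon\})=0$. *)

theory Defs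
  imports "HOL-Analysis.Analysis"
begin

definition S_metric :: "'a set \<Rightarrow> ('a \<Rightarrow> 'a \<Rightarrow> 'a \<Rightarrow> real) \<Rightarrow> bool" where
  "S_metric X S \<longleftrightarrow> X \<noteq> {} \<and>
     (\<forall>x\<in>X. \<forall>y\<in>X. \<forall>z\<in>X. S x y z \<ge> 0) \<and>
     (\<forall>x\<in>X. \<forall>y\<in>X. \<forall>z\<in>X. S x y z = 0 \<longleftrightarrow> x = y \<and> y = z) \<and>
     (\<forall>x\<in>X. \<forall>y\<in>X. \<forall>z\<in>X. \<forall>a\<in>X. S x y z \<le> S x x a + S y y a + S z z a)"

definition S_converges :: "('a \<Rightarrow> 'a \<Rightarrow> 'a \<Rightarrow> real) \<Rightarrow> (nat \<Rightarrow> 'a) \<Rightarrow> 'a \<Rightarrow> bool" where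
  "S_converges S y l \<longleftrightarrow> (\<forall>\<epsilon>>0. \<exists>k. \<forall>n\<ge>k. S (y n) (y n) l < \<epsilon>)"

definition has_natural_density :: "nat set \<Rightarrow> real \<Rightarrow> bool" where
  "has_natural_density B d \<longleftrightarrow>
     ((\<lambda>n. real (card {k\<in>B. 1 \<le> k \<and> k \<le> n}) / real n) \<longlonglongrightarrow> d)"

definition S_stat_converges :: "('a \<Rightarrow> 'a \<Rightarrow> 'a \<Rightarrow> real) \<Rightarrow> (nat \<Rightarrow> 'a) \<Rightarrow> 'a \<Rightarrow> bool" where
  "S_stat_converges S x l \<longleftrightarrow>
     (\<forall>\<epsilon>>0. has_natural_density {n. 1 \<le> n \<and> S (x n) (x n) l \<ge> \<epsilon>} 0)"

end

theory Submission
  imports Defs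
begin

lemma density0_compl_infinite:
  assumes "has_natural_density B 0"
  shows "infinite {n::nat. 1 \<le> n \<and> n \<notin> B}"
proof
  assume fin: "finite {n::nat. 1 \<le> n \<and> n \<notin> B}"
  then obtain N where N: "\<And>n. n \<in> {n::nat. 1 \<le> n \<and> n \<notin> B} \<Longrightarrow> n \<le> N"
    using finite_nat_set_iff_bounded_le[THEN iffD1, OF fin] by auto
  have "\<forall>\<^sub>F n in sequentially. real (card {k\<in>B. 1 \<le> k \<and> k \<le> n}) / real n < 1/2"
    using assms unfolding has_natural_density_def
    by (rule order_tendstoD) simp
  then obtain M where M: "\<And>n. n \<ge> M \<Longrightarrow> real (card {k\<in>B. 1 \<le> k \<and> k \<le> n}) / real n < 1/2"
    by (auto simp: eventually_sequentially)
  define n where "n = M + 2*N + 1"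
  have sub: "{N+1..n} \<subseteq> {k\<in>B. 1 \<le> k \<and> k \<le> n}"
  proof
    fix k assume k: "k \<in> {N+1..n}"
    hence k1: "1 \<le> k" "k \<le> n" "\<not> k \<le> N" by auto
    hence "k \<in> B" using N[of k] by auto
    thus "k \<in> {k\<in>B. 1 \<le> k \<and> k \<le> n}" using k1 by simp
  qed
  have cm: "card {N+1..n} \<le> card {k\<in>B. 1 \<le> k \<and> k \<le> n}"
    by (rule card_mono[OF _ sub]) auto
  have Nn: "N \<le> n" "M \<le> n" by (simp_all add: n_def)
  have "card {N+1..n} = n - N" by simp
  hence "real (n - N) \<le> real (card {k\<in>B. 1 \<le> k \<and> k \<le> n})"
    using cm by linarith
  hence c: "real n - real N \<le> real (card {k\<in>B. 1 \<le> k \<and> k \<le> n})"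
    using Nn by (simp add: of_nat_diff)
  have np: "real n > 0" "real n \<ge> 2 * real N" unfolding n_def by auto
  have "1/2 * real n \<le> real (card {k\<in>B. 1 \<le> k \<and> k \<le> n})"
    using c np by linarith
  hence "1/2 \<le> real (card {k\<in>B. 1 \<le> k \<and> k \<le> n}) / real n"
    using np by (simp add: le_divide_eq)
  moreover have "real (card {k\<in>B. 1 \<le> k \<and> k \<le> n}) / real n < 1/2"
    using M[OF Nn(2)] .
  ultimately show False by simp
qed

theorem corollary3p1:
  fixes X :: "'a set" and S :: "'a \<Rightarrow> 'a \<Rightarrow> 'a \<Rightarrow> real"
    and x :: "nat \<Rightarrow> 'a" and l :: 'a
  assumes "S_metric X S"
    and "\<And>n. x n \<in> X" and "l \<in> X"
    and "S_stat_converges S x l"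
  shows "\<exists>r y. strict_mono r \<and> y \<in> X \<and> S_converges S (x \<circ> r) y"
proof -
  define A where "A k = {n. S (x n) (x n) l < 1 / (real k + 1)}" for k
  have infA: "infinite (A k)" for k
  proof -
    have pos: "1 / (real k + 1) > 0" by simp
    have "infinite {n::nat. 1 \<le> n \<and> n \<notin> {n. 1 \<le> n \<and> S (x n) (x n) l \<ge> 1 / (real k + 1)}}"
      using assms(4) pos unfolding S_stat_converges_def
      by (intro density0_compl_infinite) blast
    moreover have "{n::nat. 1 \<le> n \<and> n \<notin> {n. 1 \<le> n \<and> S (x n) (x n) l \<ge> 1 / (real k + 1)}} \<subseteq> A k"
      unfolding A_def by auto
    ultimately show ?thesis using infinite_super by blast
  qed
  have ex: "\<exists>n. n \<in> A k \<and> n > m" for k m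
    using infA[of k] unfolding infinite_nat_iff_unbounded by blast
  define r where "r = rec_nat (LEAST n. n \<in> A 0) (\<lambda>k p. LEAST n. n \<in> A (Suc k) \<and> n > p)"
  have r0: "r 0 \<in> A 0"
  proof -
    have "r 0 = (LEAST n. n \<in> A 0)" unfolding r_def by simp
    thus ?thesis using LeastI_ex[of "\<lambda>n. n \<in> A 0"] ex[of 0 0] by auto
  qed
  have rS: "r (Suc k) \<in> A (Suc k) \<and> r (Suc k) > r k" for k
  proof -
    have "r (Suc k) = (LEAST n. n \<in> A (Suc k) \<and> n > r k)" unfolding r_def by simp
    thus ?thesis using LeastI_ex[OF ex[of "Suc k" "r k"]] by simp
  qed
  have rA: "r k \<in> A k" for k using r0 rS by (cases k) auto
  have sm: "strict_mono r" using rS by (intro strict_monoI_Suc) auto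
  have "S_converges S (x \<circ> r) l"
    unfolding S_converges_def
  proof (intro allI impI)
    fix e :: real assume e: "e > 0"
    obtain k where k: "1 / (real k + 1) < e"
    proof -
      obtain k where "inverse (real (Suc k)) < e" using reals_Archimedean e by blast
      moreover have "1 / (real k + 1) = inverse (real (Suc k))" by (simp add: inverse_eq_divide)
      ultimately show ?thesis using that[of k] by simp
    qed
    have "S ((x \<circ> r) n) ((x \<circ> r) n) l < e" if "n \<ge> k" for n
    proof -
      have "S (x (r n)) (x (r n)) l < 1 / (real n + 1)" using rA[of n] unfolding A_def by simp
      also have "\<dots> \<le> 1 / (real k + 1)" using that by (intro divide_left_mono) auto
      finally show ?thesis using k by simp
    qed
    thus "\<exists>k. \<forall>n\<ge>k. S ((x \<circ> r) n) ((x \<circ> r) n) l < e" by blast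
  qed
  thus ?thesis using sm assms(3) by blast
qed

end
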